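(* Let $k\ge1$, $\varepsilon>0$, and let $p,q\in\Delta([k]\times[k])$ have marginals $p_1,p_2$ and $q_1,q_2$ respectively. Then $$\|\mathcal T(p)-\mathcal T(q)\|_2^2=\frac{\alpha_H^4}{K^2}\|p-q\|_2^2+\frac{\alpha_H^2}{K^2}\big(\|p_1-q_1\|_2^2+\|p_2-q_2\|_2^2\big).$$ In particular, if $d_{TV}(p,q)>\gamma$ then $\|\mathcal T(p)-\mathcal T(q)\|_2>\frac{2\alpha_H^2\gamma}{Kk}$.
   Context: $d_{TV}(p,q)=\frac12\|p-q\|_1$. Hadamard Response (HR): let $K=2^{\lceil\log_2(k+1)\rceil}$ and let $H_K\in\{-1,1\}^{K\times K}$ be the Sylvester Hadamard matrix ($H_1=[1]$, $H_{2m}=\begin{bmatrix}H_m&H_m\\H_m&-H_m\end{bmatrix}$). Fix an injection $\phi:[k]\to\{2,\dots,K\}$ and set $C_x=\{z\in[K]:(H_K)_{\phi(x),z}=1\}$. On input $x\in[k]$, HR outputs $z\in[K]$ with probability $W(z\mid x)=\frac{2}{K}\cdot\frac{e^\varepsilon}{e^\varepsilon+1}$ if $z\in C_x$ and $\frac{2}{K}\cdot\frac{1}{e^\varepsilon+1}$ otherwise. $\alpha_H=(e^\varepsilon-1)/(e^\varepsilon+1)$. For $p\in\Delta([k]\times[k])$, $\mathcal T(p)\in\Delta([K]\times[K])$ is the distribution of $(Z_1,Z_2)$ where $(X_1,X_2)\sim p$ and $Z_1,Z_2$ are obtained by applying HR independently to $X_1$ and to $X_2$, i.e. $\mathcal T(p)(z_1,z_2)=\sum_{x_1,x_2}W(z_1\mid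 x_1)W(z_2\mid x_2)p(x_1,x_2)$. *)

theory Defs
  imports Complex_Main
begin

text \<open>Sylvester Hadamard matrix of size 2^m, with 0-based indices i, j < 2^m:
  H_1 = [1], H_{2n} = [[H_n, H_n], [H_n, -H_n]].\<close>
fun sylv0 :: "nat \<Rightarrow> nat \<Rightarrow> nat \<Rightarrow> int" where
  "sylv0 0 i j = 1"
| "sylv0 (Suc m) i j =
     (let h = 2 ^ m in
      if i < h then (if j < h then sylv0 m i j else sylv0 m i (j - h))
      else (if j < h then sylv0 m (i - h) j else - sylv0 m (i - h) (j - h)))"

text \<open>Entry (H_{2^m})_{i,j} with the paper's 1-based indices i, j in {1..2^m}.\<close>
definition hadamard :: "nat \<Rightarrow> nat \<Rightarrow> nat \<Rightarrow> int" where
  "hadamard m i j = sylv0 m (i - 1) (j - 1)"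

text \<open>K = 2^(ceil(log2(k+1))); we record the exponent.\<close>
definition HR_exp :: "nat \<Rightarrow> nat" where
  "HR_exp k = nat \<lceil>log 2 (real k + 1)\<rceil>"

definition HR_K :: "nat \<Rightarrow> nat" where
  "HR_K k = 2 ^ HR_exp k"

definition alpha_H :: "real \<Rightarrow> real" where
  "alpha_H eps = (exp eps - 1) / (exp eps + 1)"

definition HR_C :: "nat \<Rightarrow> (nat \<Rightarrow> nat) \<Rightarrow> nat \<Rightarrow> nat set" where
  "HR_C k \<phi> x = {z \<in> {1..HR_K k}. hadamard (HR_exp k) (\<phi> x) z = 1}"

definition HR_W :: "nat \<Rightarrow> real \<Rightarrow> (nat \<Rightarrow> nat) \<Rightarrow> nat \<Rightarrow> nat \<Rightarrow> real" where
  "HR_W k eps \<phi> z x =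
     (if z \<in> HR_C k \<phi> x then 2 / real (HR_K k) * (exp eps / (exp eps + 1))
      else 2 / real (HR_K k) * (1 / (exp eps + 1)))"

definition HR_T :: "nat \<Rightarrow> real \<Rightarrow> (nat \<Rightarrow> nat) \<Rightarrow> (nat \<times> nat \<Rightarrow> real) \<Rightarrow> nat \<times> nat \<Rightarrow> real" where
  "HR_T k eps \<phi> p = (\<lambda>(z1, z2). \<Sum>(x1, x2) \<in> {1..k} \<times> {1..k}.
       HR_W k eps \<phi> z1 x1 * HR_W k eps \<phi> z2 x2 * p (x1, x2))"

definition is_dist :: "'a set \<Rightarrow> ('a \<Rightarrow> real) \<Rightarrow> bool" where
  "is_dist A p \<longleftrightarrow> (\<forall>a\<in>A. 0 \<le> p a) \<and> (\<Sum>a\<in>A. p a) = 1"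

definition marg1 :: "nat \<Rightarrow> (nat \<times> nat \<Rightarrow> real) \<Rightarrow> nat \<Rightarrow> real" where
  "marg1 k p x = (\<Sum>y\<in>{1..k}. p (x, y))"

definition marg2 :: "nat \<Rightarrow> (nat \<times> nat \<Rightarrow> real) \<Rightarrow> nat \<Rightarrow> real" where
  "marg2 k p y = (\<Sum>x\<in>{1..k}. p (x, y))"

definition l2sq :: "'a set \<Rightarrow> ('a \<Rightarrow> real) \<Rightarrow> ('a \<Rightarrow> real) \<Rightarrow> real" where
  "l2sq A f g = (\<Sum>a\<in>A. (f a - g a)^2)"

definition l2dist :: "'a set \<Rightarrow> ('a \<Rightarrow> real) \<Rightarrow> ('a \<Rightarrow> real) \<Rightarrow> real" where
  "l2dist A f g = sqrt (l2sq A f g)"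

definition dTV :: "'a set \<Rightarrow> ('a \<Rightarrow> real) \<Rightarrow> ('a \<Rightarrow> real) \<Rightarrow> real" where
  "dTV A f g = (1/2) * (\<Sum>a\<in>A. \<bar>f a - g a\<bar>)"

end

theory Submission
  imports Defs
begin


lemma sylv0_pm: "sylv0 m i j = 1 \<or> sylv0 m i j = -1"
  by (induction m arbitrary: i j) (auto simp: Let_def)

lemma sylv0_row0: "sylv0 m 0 j = 1"
  by (induction m arbitrary: j) (auto simp: Let_def)

lemma sum_split_half: "(\<Sum>z<2*(h::nat). f z) = (\<Sum>z<h. f z) + (\<Sum>z<h. f (z + h))"
proof -
  have "(\<Sum>z=0..<h. f z) + (\<Sum>z=h..<2*h. f z) = (\<Sum>z=0..<2*h. f z)"
    by (rule sum.atLeastLessThan_concat) auto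
  moreover have "(\<Sum>z=h..<2*h. f z) = (\<Sum>z<h. f (z + h))"
    using sum.shift_bounds_nat_ivl[of f 0 h h] by (simp add: lessThan_atLeast0 mult_2)
  ultimately show ?thesis by (simp add: lessThan_atLeast0)
qed

lemma sylv0_Suc_lo: "z < 2^m \<Longrightarrow> sylv0 (Suc m) a z = (if a < 2^m then sylv0 m a z else sylv0 m (a-2^m) z)"
  by (simp add: Let_def)
lemma sylv0_Suc_hi: "z < 2^m \<Longrightarrow> sylv0 (Suc m) a (z+2^m) = (if a < 2^m then sylv0 m a z else - sylv0 m (a-2^m) z)"
  by (simp add: Let_def)

lemma sylv0_orth:
  "a < 2^m \<Longrightarrow> b < 2^m \<Longrightarrow>
   (\<Sum>z<2^m. sylv0 m a z * sylv0 m b z) = (if a = b then 2^m else 0)"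
proof (induction m arbitrary: a b)
  case 0
  then show ?case by simp
next
  case (Suc m)
  define h :: nat where "h = 2^m"
  have hp: "(2::nat)^Suc m = 2*h" by (simp add: h_def)
  have s: "(\<Sum>z<2^Suc m. sylv0 (Suc m) a z * sylv0 (Suc m) b z)
     = (\<Sum>z<h. (if a < h then sylv0 m a z else sylv0 m (a-h) z) * (if b < h then sylv0 m b z else sylv0 m (b-h) z))
       + (\<Sum>z<h. (if a < h then sylv0 m a z else - sylv0 m (a-h) z) * (if b < h then sylv0 m b z else - sylv0 m (b-h) z))"
    unfolding hp sum_split_half
    by (intro arg_cong2[where f="(+)"] sum.cong) (simp_all add: h_def sylv0_Suc_lo sylv0_Suc_hi)
  show ?case
  proof (cases "a < h")
    case a: True
    show ?thesis
    proof (cases "b < h")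
      case b: True
      have "(\<Sum>z<h. sylv0 m a z * sylv0 m b z) = (if a = b then h else 0)"
        using Suc.IH a b h_def by simp
      then show ?thesis using a b unfolding s by (simp add: hp h_def)
    next
      case b: False
      then show ?thesis using a b unfolding s by (simp add: sum_negf)
    qed
  next
    case a: False
    show ?thesis
    proof (cases "b < h")
      case b: True
      then show ?thesis using a b unfolding s by (simp add: sum_negf)
    next
      case b: False
      have "(\<Sum>z<h. sylv0 m (a-h) z * sylv0 m (b-h) z) = (if a-h = b-h then h else 0)"
        using Suc.IH[of "a-h" "b-h"] a b Suc.prems h_def by simp
      moreover have "(a-h = b-h) = (a = b)" using a b by auto
      ultimately show ?thesis using a b unfolding s by (simp add: hp h_def)
    qed
  qed
qed

lemma gram:
  fixes W :: "nat \<Rightarrow> nat \<Rightarrow> real" and d :: "nat \<Rightarrow> nat \<Rightarrow> real"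
  assumes "finite I" "finite J"
  shows "(\<Sum>z1\<in>J. \<Sum>z2\<in>J. (\<Sum>a\<in>I. \<Sum>b\<in>I. W z1 a * W z2 b * d a b)^2)
    = (\<Sum>a\<in>I. \<Sum>a'\<in>I. \<Sum>b\<in>I. \<Sum>b'\<in>I. d a b * d a' b' * (\<Sum>z\<in>J. W z a * W z a') * (\<Sum>z\<in>J. W z b * W z b'))"
proof -
  have swap2: "\<And>f. (\<Sum>z1\<in>J. \<Sum>z2\<in>J. \<Sum>a\<in>I. f z1 z2 a) = (\<Sum>a\<in>I. \<Sum>z1\<in>J. \<Sum>z2\<in>J. f z1 z2 a :: real)"
  proof -
    fix f :: "nat \<Rightarrow> nat \<Rightarrow> nat \<Rightarrow> real"
    have "(\<Sum>z1\<in>J. \<Sum>z2\<in>J. \<Sum>a\<in>I. f z1 z2 a) = (\<Sum>z1\<in>J. \<Sum>a\<in>I. \<Sum>z2\<in>J. f z1 z2 a)"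
      by (rule sum.cong[OF refl], rule sum.swap)
    also have "\<dots> = (\<Sum>a\<in>I. \<Sum>z1\<in>J. \<Sum>z2\<in>J. f z1 z2 a)" by (rule sum.swap)
    finally show "?thesis f" .
  qed
  have "(\<Sum>z1\<in>J. \<Sum>z2\<in>J. (\<Sum>a\<in>I. \<Sum>b\<in>I. W z1 a * W z2 b * d a b)^2)
    = (\<Sum>z1\<in>J. \<Sum>z2\<in>J. \<Sum>a\<in>I. \<Sum>a'\<in>I. \<Sum>b\<in>I. \<Sum>b'\<in>I. W z1 a * W z2 b * d a b * (W z1 a' * W z2 b' * d a' b'))"
    by (simp add: power2_eq_square sum_product)
  also have "\<dots> = (\<Sum>a\<in>I. \<Sum>a'\<in>I. \<Sum>b\<in>I. \<Sum>b'\<in>I. \<Sum>z1\<in>J. \<Sum>z2\<in>J. W z1 a * W z2 b * d a b * (W z1 a' * W z2 b' * d a' b'))"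
    by (simp only: swap2)
  also have "\<dots> = (\<Sum>a\<in>I. \<Sum>a'\<in>I. \<Sum>b\<in>I. \<Sum>b'\<in>I. d a b * d a' b' * (\<Sum>z\<in>J. W z a * W z a') * (\<Sum>z\<in>J. W z b * W z b'))"
    by (intro sum.cong refl) (simp add: sum_product sum_distrib_left ac_simps)
  finally show ?thesis .
qed

lemma collapse:
  fixes d :: "nat \<Rightarrow> nat \<Rightarrow> real" and s K :: real
  assumes fin: "finite I" and z: "(\<Sum>a\<in>I. \<Sum>b\<in>I. d a b) = 0"
  shows "(\<Sum>a\<in>I. \<Sum>a'\<in>I. \<Sum>b\<in>I. \<Sum>b'\<in>I. d a b * d a' b' * ((1 + s * (if a = a' then 1 else 0)) / K) * ((1 + s * (if b = b' then 1 else 0)) / K))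
    = s^2 / K^2 * (\<Sum>a\<in>I. \<Sum>b\<in>I. (d a b)^2) + s / K^2 * ((\<Sum>a\<in>I. (\<Sum>b\<in>I. d a b)^2) + (\<Sum>b\<in>I. (\<Sum>a\<in>I. d a b)^2))"
proof -
  define T0 where "T0 = (\<Sum>a\<in>I. \<Sum>a'\<in>I. \<Sum>b\<in>I. \<Sum>b'\<in>I. d a b * d a' b')"
  define T1 where "T1 = (\<Sum>a\<in>I. \<Sum>a'\<in>I. \<Sum>b\<in>I. \<Sum>b'\<in>I. if a = a' then d a b * d a' b' else 0)"
  define T2 where "T2 = (\<Sum>a\<in>I. \<Sum>a'\<in>I. \<Sum>b\<in>I. \<Sum>b'\<in>I. if b = b' then d a b * d a' b' else 0)"
  define T3 where "T3 = (\<Sum>a\<in>I. \<Sum>a'\<in>I. \<Sum>b\<in>I. \<Sum>b'\<in>I. if a = a' \<and> b = b' then d a b * d a' b' else 0)"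
  have e: "(\<Sum>a\<in>I. \<Sum>a'\<in>I. \<Sum>b\<in>I. \<Sum>b'\<in>I. d a b * d a' b' * ((1 + s * (if a = a' then 1 else 0)) / K) * ((1 + s * (if b = b' then 1 else 0)) / K))
     = (\<Sum>a\<in>I. \<Sum>a'\<in>I. \<Sum>b\<in>I. \<Sum>b'\<in>I. 1/K^2 * (d a b * d a' b') + s/K^2 * (if a = a' then d a b * d a' b' else 0)
        + s/K^2 * (if b = b' then d a b * d a' b' else 0) + s^2/K^2 * (if a = a' \<and> b = b' then d a b * d a' b' else 0))"
    by (intro sum.cong refl) (auto simp: algebra_simps power2_eq_square add_divide_distrib)
  also have "\<dots> = 1/K^2 * T0 + s/K^2 * T1 + s/K^2 * T2 + s^2/K^2 * T3"
    unfolding T0_def T1_def T2_def T3_def by (simp add: sum.distrib sum_distrib_left)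
  also have "T0 = 0"
  proof -
    have "T0 = (\<Sum>a\<in>I. \<Sum>b\<in>I. d a b) * (\<Sum>a\<in>I. \<Sum>b\<in>I. d a b)"
      unfolding T0_def by (simp add: sum_product)
    then show ?thesis using z by simp
  qed
  also have "T1 = (\<Sum>a\<in>I. (\<Sum>b\<in>I. d a b)^2)"
    unfolding T1_def using fin by (simp add: power2_eq_square sum_product if_distrib sum.If_cases)
  also have "T2 = (\<Sum>b\<in>I. (\<Sum>a\<in>I. d a b)^2)"
  proof -
    have "T2 = (\<Sum>a\<in>I. \<Sum>a'\<in>I. \<Sum>b\<in>I. d a b * d a' b)"
      unfolding T2_def using fin by (simp add: sum.If_cases)
    also have "\<dots> = (\<Sum>a\<in>I. \<Sum>b\<in>I. \<Sum>a'\<in>I. d a b * d a' b)"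
      by (intro sum.cong refl sum.swap)
    also have "\<dots> = (\<Sum>b\<in>I. \<Sum>a\<in>I. \<Sum>a'\<in>I. d a b * d a' b)"
      by (rule sum.swap)
    finally show ?thesis by (simp add: power2_eq_square sum_product)
  qed
  also have "T3 = (\<Sum>a\<in>I. \<Sum>b\<in>I. (d a b)^2)"
  proof -
    have "T3 = (\<Sum>a\<in>I. \<Sum>a'\<in>I. if a = a' then (\<Sum>b\<in>I. \<Sum>b'\<in>I. if b = b' then d a b * d a' b' else 0) else 0)"
      unfolding T3_def by (intro sum.cong refl) auto
    then show ?thesis using fin by (simp add: power2_eq_square sum.delta)
  qed
  finally show ?thesis by (simp add: distrib_left)
qed

lemma cs_abs:
  fixes f :: "'a \<Rightarrow> real"
  assumes "finite A"
  shows "(\<Sum>x\<in>A. \<bar>f x\<bar>)^2 \<le> real (card A) * (\<Sum>x\<in>A. (f x)^2)"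
proof -
  have "0 \<le> (\<Sum>x\<in>A. \<Sum>y\<in>A. (\<bar>f x\<bar> - \<bar>f y\<bar>)^2)" by (intro sum_nonneg) auto
  also have "\<dots> = (\<Sum>x\<in>A. \<Sum>y\<in>A. (f x)^2 + (f y)^2 - 2 * (\<bar>f x\<bar> * \<bar>f y\<bar>))"
    by (intro sum.cong refl) (simp add: power2_eq_square algebra_simps)
  also have "\<dots> = 2 * (real (card A) * (\<Sum>x\<in>A. (f x)^2)) - 2 * (\<Sum>x\<in>A. \<bar>f x\<bar>)^2"
  proof -
    have 1: "(\<Sum>x\<in>A. \<Sum>y\<in>A. (f x)^2) = real (card A) * (\<Sum>x\<in>A. (f x)^2)"
      by (simp add: sum_distrib_left mult.commute)
    have 2: "(\<Sum>x\<in>A. \<Sum>y\<in>A. (f y)^2) = real (card A) * (\<Sum>x\<in>A. (f x)^2)"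
      by simp
    have 3: "(\<Sum>x\<in>A. \<Sum>y\<in>A. 2 * (\<bar>f x\<bar> * \<bar>f y\<bar>)) = 2 * (\<Sum>x\<in>A. \<bar>f x\<bar>)^2"
      by (simp add: power2_eq_square sum_product sum_distrib_left[symmetric])
    show ?thesis by (simp only: sum.distrib sum_subtractf 1 2 3)
  qed
  finally show ?thesis by simp
qed


lemma hadamard_orth:
  assumes "i \<in> {1..2^m}" "j \<in> {1..2^m}"
  shows "(\<Sum>z\<in>{1..2^m}. real_of_int (hadamard m i z) * real_of_int (hadamard m j z)) = (if i = j then 2^m else 0)"
proof -
  have "(\<Sum>z\<in>{1..2^m}. real_of_int (hadamard m i z) * real_of_int (hadamard m j z))
      = real_of_int (\<Sum>z<2^m. sylv0 m (i-1) z * sylv0 m (j-1) z)"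
    by (simp add: sum.atLeast1_atMost_eq[where n="2^m", simplified] hadamard_def)
  also have "\<dots> = (if i = j then 2^m else 0)"
    using assms by (subst sylv0_orth) auto
  finally show ?thesis .
qed

lemma hadamard_row1: "hadamard m 1 z = 1"
  by (simp add: hadamard_def sylv0_row0)

lemma hadamard_row1': "hadamard m (Suc 0) z = 1"
  by (simp add: hadamard_def sylv0_row0)

lemma hadamard_pm: "hadamard m i z = 1 \<or> hadamard m i z = -1"
  by (simp add: hadamard_def sylv0_pm)

lemma HR_W_eq:
  assumes "z \<in> {1..HR_K k}"
  shows "HR_W k eps \<phi> z x = (1 + alpha_H eps * real_of_int (hadamard (HR_exp k) (\<phi> x) z)) / real (HR_K k)"
proof -
  have p: "exp eps + 1 > 0" by (simp add: add_pos_pos)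
  show ?thesis
    using hadamard_pm[of "HR_exp k" "\<phi> x" z] assms p
    by (auto simp: HR_W_def HR_C_def alpha_H_def field_simps)
qed


lemma HR_G:
  assumes inj: "inj_on \<phi> {1..k}" and rng: "\<phi> ` {1..k} \<subseteq> {2..HR_K k}"
    and a: "a \<in> {1..k}" and b: "b \<in> {1..k}"
  shows "(\<Sum>z\<in>{1..HR_K k}. HR_W k eps \<phi> z a * HR_W k eps \<phi> z b)
       = (1 + (alpha_H eps)^2 * (if a = b then 1 else 0)) / real (HR_K k)"
proof -
  define e where "e = HR_exp k"
  define K where "K = HR_K k"
  define \<alpha> where "\<alpha> = alpha_H eps"
  have K: "K = 2^e" by (simp add: K_def e_def HR_K_def)
  have Kpos: "real K > 0" by (simp add: K)
  define ha where "ha z = real_of_int (hadamard e (\<phi> a) z)" for z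
  define hb where "hb z = real_of_int (hadamard e (\<phi> b) z)" for z
  have pa: "\<phi> a \<in> {2..K}" and pb: "\<phi> b \<in> {2..K}" using rng a b unfolding K_def by blast+
  have sa: "(\<Sum>z\<in>{1..K}. ha z) = 0"
  proof -
    have "(\<Sum>z\<in>{1..K}. ha z) = (\<Sum>z\<in>{1..2^e}. real_of_int (hadamard e (\<phi> a) z) * real_of_int (hadamard e 1 z))"
      by (simp add: ha_def hadamard_row1 hadamard_row1' K)
    also have "\<dots> = 0" using pa by (subst hadamard_orth) (auto simp: K)
    finally show ?thesis .
  qed
  have sb: "(\<Sum>z\<in>{1..K}. hb z) = 0"
  proof -
    have "(\<Sum>z\<in>{1..K}. hb z) = (\<Sum>z\<in>{1..2^e}. real_of_int (hadamard e (\<phi> b) z) * real_of_int (hadamard e 1 z))"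
      by (simp add: hb_def hadamard_row1 hadamard_row1' K)
    also have "\<dots> = 0" using pb by (subst hadamard_orth) (auto simp: K)
    finally show ?thesis .
  qed
  have sab: "(\<Sum>z\<in>{1..K}. ha z * hb z) = (if a = b then real K else 0)"
  proof -
    have "(\<Sum>z\<in>{1..K}. ha z * hb z) = (if \<phi> a = \<phi> b then 2^e else 0)"
      unfolding ha_def hb_def K using pa pb by (subst hadamard_orth) (auto simp: K)
    also have "(\<phi> a = \<phi> b) = (a = b)" using inj a b by (auto dest: inj_onD)
    finally show ?thesis by (simp add: K)
  qed
  have "(\<Sum>z\<in>{1..K}. HR_W k eps \<phi> z a * HR_W k eps \<phi> z b)
      = (\<Sum>z\<in>{1..K}. (1 + \<alpha> * ha z + \<alpha> * hb z + \<alpha>^2 * (ha z * hb z)) / (real K)^2)"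
    by (intro sum.cong refl) (simp add: HR_W_eq K_def e_def \<alpha>_def ha_def hb_def power2_eq_square algebra_simps)
  also have "\<dots> = (real K + \<alpha> * (\<Sum>z\<in>{1..K}. ha z) + \<alpha> * (\<Sum>z\<in>{1..K}. hb z) + \<alpha>^2 * (\<Sum>z\<in>{1..K}. ha z * hb z)) / (real K)^2"
    by (simp add: sum_divide_distrib[symmetric] sum.distrib sum_distrib_left)
  also have "\<dots> = (1 + \<alpha>^2 * (if a = b then 1 else 0)) / real K"
    using Kpos unfolding sa sb sab by (simp add: power2_eq_square field_simps)
  finally show ?thesis by (simp add: K_def \<alpha>_def)
qed

theorem lemma6p4:
  fixes k :: nat and eps :: real and \<phi> :: "nat \<Rightarrow> nat"
    and p q :: "nat \<times> nat \<Rightarrow> real"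
  assumes "k \<ge> 1" and "eps > 0"
    and "inj_on \<phi> {1..k}" and "\<phi> ` {1..k} \<subseteq> {2..HR_K k}"
    and "is_dist ({1..k} \<times> {1..k}) p" and "is_dist ({1..k} \<times> {1..k}) q"
  shows "(l2sq ({1..HR_K k} \<times> {1..HR_K k}) (HR_T k eps \<phi> p) (HR_T k eps \<phi> q)
           = alpha_H eps ^ 4 / real (HR_K k) ^ 2 * l2sq ({1..k} \<times> {1..k}) p q
             + alpha_H eps ^ 2 / real (HR_K k) ^ 2
                 * (l2sq {1..k} (marg1 k p) (marg1 k q) + l2sq {1..k} (marg2 k p) (marg2 k q)))
         \<and> (\<forall>\<gamma>::real. dTV ({1..k} \<times> {1..k}) p q > \<gamma> \<longrightarrow>
           l2dist ({1..HR_K k} \<times> {1..HR_K k}) (HR_T k eps \<phi> p) (HR_T k eps \<phi> q)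
             > 2 * alpha_H eps ^ 2 * \<gamma> / (real (HR_K k) * real k))"
proof -
  define I where "I = {1..k}"
  define J where "J = {1..HR_K k}"
  define K where "K = HR_K k"
  define \<alpha> where "\<alpha> = alpha_H eps"
  define W where "W z x = HR_W k eps \<phi> z x" for z x
  define d where "d a b = p (a, b) - q (a, b)" for a b
  have finI: "finite I" and finJ: "finite J" by (simp_all add: I_def J_def)
  have diff: "HR_T k eps \<phi> p (z1, z2) - HR_T k eps \<phi> q (z1, z2) = (\<Sum>a\<in>I. \<Sum>b\<in>I. W z1 a * W z2 b * d a b)" for z1 z2
    unfolding HR_T_def I_def W_def d_def
    by (simp add: sum.cartesian_product[symmetric] sum_subtractf[symmetric] right_diff_distrib)
  have sd: "(\<Sum>a\<in>I. \<Sum>b\<in>I. d a b) = 0"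
  proof -
    have "(\<Sum>a\<in>I. \<Sum>b\<in>I. d a b) = (\<Sum>x\<in>I\<times>I. p x) - (\<Sum>x\<in>I\<times>I. q x)"
      unfolding d_def by (simp add: sum.cartesian_product sum_subtractf)
    then show ?thesis using assms(5,6) by (simp add: is_dist_def I_def)
  qed
  have G: "(\<Sum>z\<in>J. W z a * W z b) = (1 + \<alpha>^2 * (if a = b then 1 else 0)) / real K" if "a \<in> I" "b \<in> I" for a b
    unfolding W_def J_def \<alpha>_def K_def using HR_G[OF assms(3,4)] that by (simp add: I_def)
  have "l2sq (J \<times> J) (HR_T k eps \<phi> p) (HR_T k eps \<phi> q)
      = (\<Sum>z1\<in>J. \<Sum>z2\<in>J. (HR_T k eps \<phi> p (z1, z2) - HR_T k eps \<phi> q (z1, z2))^2)"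
    unfolding l2sq_def by (simp add: sum.cartesian_product split_def)
  also have "\<dots> = (\<Sum>z1\<in>J. \<Sum>z2\<in>J. (\<Sum>a\<in>I. \<Sum>b\<in>I. W z1 a * W z2 b * d a b)^2)"
    by (simp only: diff)
  also have "\<dots> = (\<Sum>a\<in>I. \<Sum>a'\<in>I. \<Sum>b\<in>I. \<Sum>b'\<in>I. d a b * d a' b' * (\<Sum>z\<in>J. W z a * W z a') * (\<Sum>z\<in>J. W z b * W z b'))"
    by (rule gram[OF finI finJ])
  also have "\<dots> = (\<Sum>a\<in>I. \<Sum>a'\<in>I. \<Sum>b\<in>I. \<Sum>b'\<in>I. d a b * d a' b' * ((1 + \<alpha>^2 * (if a = a' then 1 else 0)) / real K) * ((1 + \<alpha>^2 * (if b = b' then 1 else 0)) / real K))"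
    by (intro sum.cong refl) (simp add: G)
  also have "\<dots> = (\<alpha>^2)^2 / (real K)^2 * (\<Sum>a\<in>I. \<Sum>b\<in>I. (d a b)^2) + \<alpha>^2 / (real K)^2 * ((\<Sum>a\<in>I. (\<Sum>b\<in>I. d a b)^2) + (\<Sum>b\<in>I. (\<Sum>a\<in>I. d a b)^2))"
    by (rule collapse[OF finI sd])
  finally have main: "l2sq (J \<times> J) (HR_T k eps \<phi> p) (HR_T k eps \<phi> q) = \<dots>" .
  have L: "l2sq (I \<times> I) p q = (\<Sum>a\<in>I. \<Sum>b\<in>I. (d a b)^2)"
    unfolding l2sq_def d_def by (simp add: sum.cartesian_product)
  have M1: "l2sq I (marg1 k p) (marg1 k q) = (\<Sum>a\<in>I. (\<Sum>b\<in>I. d a b)^2)"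
    unfolding l2sq_def marg1_def d_def I_def by (simp add: sum_subtractf)
  have M2: "l2sq I (marg2 k p) (marg2 k q) = (\<Sum>b\<in>I. (\<Sum>a\<in>I. d a b)^2)"
    unfolding l2sq_def marg2_def d_def I_def by (simp add: sum_subtractf)
  have part1: "l2sq (J \<times> J) (HR_T k eps \<phi> p) (HR_T k eps \<phi> q)
     = \<alpha> ^ 4 / real K ^ 2 * l2sq (I \<times> I) p q + \<alpha> ^ 2 / real K ^ 2 * (l2sq I (marg1 k p) (marg1 k q) + l2sq I (marg2 k p) (marg2 k q))"
    unfolding main L M1 M2 by (simp add: power_mult[symmetric])
  have part2: "l2dist (J \<times> J) (HR_T k eps \<phi> p) (HR_T k eps \<phi> q) > 2 * \<alpha> ^ 2 * \<gamma> / (real K * real k)"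
    if g: "dTV (I \<times> I) p q > \<gamma>" for \<gamma>
  proof -
    define S where "S = l2sq (I \<times> I) p q"
    define A where "A = (\<Sum>x\<in>I\<times>I. \<bar>p x - q x\<bar>)"
    have kpos: "real k > 0" using assms(1) by simp
    have Kpos: "real K > 0" by (simp add: K_def HR_K_def)
    have apos: "\<alpha> > 0" unfolding \<alpha>_def alpha_H_def using assms(2)
      by (intro divide_pos_pos) (simp_all add: add_pos_pos)
    have S0: "S \<ge> 0" unfolding S_def l2sq_def by (intro sum_nonneg) auto
    have A0: "A \<ge> 0" unfolding A_def by (intro sum_nonneg) auto
    have cardI: "card (I \<times> I) = k * k" by (simp add: I_def card_cartesian_product)
    have "A^2 \<le> real (card (I \<times> I)) * S"
      unfolding A_def S_def l2sq_def by (rule cs_abs) (simp add: finI)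
    also have "\<dots> = (real k * sqrt S)^2" using S0 by (simp add: cardI power_mult_distrib power2_eq_square)
    finally have AS: "A \<le> real k * sqrt S"
      using A0 kpos S0 by (meson mult_nonneg_nonneg power2_le_imp_le real_sqrt_ge_zero of_nat_0_le_iff)
    have m1: "l2sq I (marg1 k p) (marg1 k q) \<ge> 0" and m2: "l2sq I (marg2 k p) (marg2 k q) \<ge> 0"
      unfolding l2sq_def by (auto intro!: sum_nonneg)
    have "\<alpha> ^ 4 / real K ^ 2 * S \<le> l2sq (J \<times> J) (HR_T k eps \<phi> p) (HR_T k eps \<phi> q)"
      unfolding part1 S_def using m1 m2 Kpos by (intro add_increasing2) (auto intro!: mult_nonneg_nonneg)
    then have "sqrt (\<alpha> ^ 4 / real K ^ 2 * S) \<le> l2dist (J \<times> J) (HR_T k eps \<phi> p) (HR_T k eps \<phi> q)"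
      unfolding l2dist_def by (rule real_sqrt_le_mono)
    moreover have "sqrt (\<alpha> ^ 4 / real K ^ 2 * S) = \<alpha>^2 / real K * sqrt S"
    proof -
      have "\<alpha> ^ 4 / real K ^ 2 = (\<alpha>^2 / real K)^2" by (simp add: power_divide power_mult[symmetric])
      then show ?thesis using Kpos by (simp add: real_sqrt_mult)
    qed
    moreover have "2 * \<alpha> ^ 2 * \<gamma> / (real K * real k) < \<alpha>^2 / real K * sqrt S"
    proof -
      have "dTV (I \<times> I) p q = A / 2" unfolding dTV_def A_def by simp
      with g have "2 * \<gamma> < A" by simp
      with AS have "2 * \<gamma> < real k * sqrt S" by simp
      then have "2 * \<gamma> / real k < sqrt S" using kpos by (simp add: field_simps)
      then have "\<alpha>^2 / real K * (2 * \<gamma> / real k) < \<alpha>^2 / real K * sqrt S"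
        using apos Kpos by (intro mult_strict_left_mono) auto
      then show ?thesis by (simp add: field_simps)
    qed
    ultimately show ?thesis by linarith
  qed
  show ?thesis using part1 part2 unfolding I_def J_def K_def \<alpha>_def by blast
qed

end
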